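(* Let $\Pi$ be a "linear model" on a finite set $\mathcal X$, in the following sense: $\Pi$ is a convex set of probability distributions on $\mathcal X$, and for every probability distribution $\mathsf p$ on $\mathcal X$ there is a unique minimizer $\pi^*(\mathsf p)$ of $\pi\mapsto D_{KL}(\mathsf p\|\pi)$ over $\Pi$, which satisfies the Pythagorean identity $D_{KL}(\mathsf p\|\pi)=D_{KL}(\mathsf p\|\pi^*(\mathsf p))+D_{KL}(\pi^*(\mathsf p)\|\pi)$ for all $\pi\in\Pi$. Let $\hat{\mathsf p}_1,\dots,\hat{\mathsf p}_p$ be probability distributions on $\mathcal X$ with $D_{KL}(\hat{\mathsf p}_k\|\pi^*(\hat{\mathsf p}_k))<\infty$ for each $k$, set $\pi_k=\pi^*(\hat{\mathsf p}_k)$, and let $\lambda\in\Delta$. Then $$\pi^*(\hat{\mathsf p}_\lambda)=\sum_{k=1}^p\lambda_k\pi_k .$$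
   Context: Fix an integer $p\ge 1$, $\Delta=\{\lambda\in\mathbb R^p:\lambda_k\ge 0,\ \sum_k\lambda_k=1\}$, and $\hat{\mathsf p}_\lambda=\sum_k\lambda_k\hat{\mathsf p}_k$. $D_{KL}(P\|Q)=\sum_xP(x)\log\frac{P(x)}{Q(x)}\in[0,\infty]$ with conventions $0\log\frac0q=0$, $a\log\frac a0=+\infty$ for $a>0$. *)

theory Defs
  imports "HOL-Analysis.Analysis"
begin

definition is_dist :: "('a::finite \<Rightarrow> real) \<Rightarrow> bool" where
  "is_dist P \<longleftrightarrow> (\<forall>x. P x \<ge> 0) \<and> (\<Sum>x\<in>UNIV. P x) = 1"

definition KL :: "('a::finite \<Rightarrow> real) \<Rightarrow> ('a \<Rightarrow> real) \<Rightarrow> ereal" where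
  "KL P Q = (\<Sum>x\<in>UNIV. (if P x = 0 then 0
                         else if Q x = 0 then \<infinity>
                         else ereal (P x * ln (P x / Q x))))"

definition convex_dist_set :: "('a \<Rightarrow> real) set \<Rightarrow> bool" where
  "convex_dist_set S \<longleftrightarrow>
     (\<forall>q\<in>S. \<forall>r\<in>S. \<forall>t::real. 0 \<le> t \<and> t \<le> 1 \<longrightarrow> (\<lambda>x. t * q x + (1 - t) * r x) \<in> S)"

definition is_KL_minimizer :: "('a::finite \<Rightarrow> real) set \<Rightarrow> ('a \<Rightarrow> real) \<Rightarrow> ('a \<Rightarrow> real) \<Rightarrow> bool" where
  "is_KL_minimizer M P \<pi> \<longleftrightarrow> \<pi> \<in> M \<and> (\<forall>\<pi>'\<in>M. KL P \<pi> \<le> KL P \<pi>')"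

definition pistar :: "('a::finite \<Rightarrow> real) set \<Rightarrow> ('a \<Rightarrow> real) \<Rightarrow> ('a \<Rightarrow> real)" where
  "pistar M P = (THE \<pi>. is_KL_minimizer M P \<pi>)"

definition linear_model :: "('a::finite \<Rightarrow> real) set \<Rightarrow> bool" where
  "linear_model M \<longleftrightarrow>
     (\<forall>\<pi>\<in>M. is_dist \<pi>) \<and> convex_dist_set M \<and>
     (\<forall>P. is_dist P \<longrightarrow> (\<exists>!\<pi>. is_KL_minimizer M P \<pi>)) \<and>
     (\<forall>P. is_dist P \<longrightarrow> (\<forall>\<pi>\<in>M. KL P \<pi> = KL P (pistar M P) + KL (pistar M P) \<pi>))"

end

theory Submission
  imports Defs
begin

lemma KL_real:
  fixes P Q :: "'a::finite \<Rightarrow> real"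
  assumes "\<And>x. P x \<noteq> 0 \<Longrightarrow> Q x \<noteq> 0"
  shows "KL P Q = ereal (\<Sum>x\<in>UNIV. P x * ln (P x / Q x))"
proof -
  have "KL P Q = (\<Sum>x\<in>UNIV. ereal (P x * ln (P x / Q x)))"
    unfolding KL_def by (rule sum.cong) (auto simp: assms)
  then show ?thesis by simp
qed

lemma KL_inf:
  fixes P Q :: "'a::finite \<Rightarrow> real"
  assumes "P x \<noteq> 0" "Q x = 0"
  shows "KL P Q = \<infinity>"
  unfolding KL_def sum_Pinfty using assms by (intro conjI bexI[of _ x]) auto

lemma KL_fin_supp:
  fixes P Q :: "'a::finite \<Rightarrow> real"
  assumes "KL P Q \<noteq> \<infinity>" "P x \<noteq> 0"
  shows "Q x \<noteq> 0"
  using KL_inf assms by blast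

lemma convex_comb_mem:
  fixes M :: "('a \<Rightarrow> real) set" and q :: "'b \<Rightarrow> 'a \<Rightarrow> real"
  assumes cv: "convex_dist_set M" and fin: "finite I"
  shows "\<forall>l::'b \<Rightarrow> real. (\<forall>i\<in>I. l i \<ge> 0) \<and> sum l I = 1 \<and> (\<forall>i\<in>I. q i \<in> M)
           \<longrightarrow> (\<lambda>x. \<Sum>i\<in>I. l i * q i x) \<in> M"
  using fin
proof (induction I rule: finite_induct)
  case empty
  then show ?case by simp
next
  case (insert i I)
  show ?case
  proof (intro allI impI)
    fix l :: "'b \<Rightarrow> real" assume H: "(\<forall>j\<in>insert i I. l j \<ge> 0) \<and> sum l (insert i I) = 1 \<and> (\<forall>j\<in>insert i I. q j \<in> M)"
    have s: "l i + sum l I = 1" using H insert by simp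
    show "(\<lambda>x. \<Sum>j\<in>insert i I. l j * q j x) \<in> M"
    proof (cases "sum l I = 0")
      case True
      then have z: "\<forall>j\<in>I. l j = 0" using H insert sum_nonneg_eq_0_iff by (metis insertCI)
      have "(\<lambda>x. \<Sum>j\<in>insert i I. l j * q j x) = q i"
        using z s True insert by (auto simp: fun_eq_iff)
      then show ?thesis using H by simp
    next
      case False
      define s' where "s' = sum l I"
      have sp: "s' > 0" using False H s'_def by (simp add: order_neq_le_trans sum_nonneg)
      define m where "m j = l j / s'" for j
      have "sum m I = 1" unfolding m_def using sp s'_def by (simp add: sum_divide_distrib[symmetric])
      then have r: "(\<lambda>x. \<Sum>j\<in>I. m j * q j x) \<in> M"
      proof -
        have "\<forall>j\<in>I. 0 \<le> m j" using H sp unfolding m_def by auto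
        then show ?thesis using insert.IH H \<open>sum m I = 1\<close> by blast
      qed
      have t: "0 \<le> l i" "l i \<le> 1" using H s sp s'_def by auto
      have "(\<lambda>x. l i * q i x + (1 - l i) * (\<Sum>j\<in>I. m j * q j x)) \<in> M"
        using cv r H t unfolding convex_dist_set_def by auto
      moreover have "(\<lambda>x. l i * q i x + (1 - l i) * (\<Sum>j\<in>I. m j * q j x))
          = (\<lambda>x. \<Sum>j\<in>insert i I. l j * q j x)"
      proof
        fix x
        have "1 - l i = s'" using s s'_def by simp
        then have "(1 - l i) * (\<Sum>j\<in>I. m j * q j x) = (\<Sum>j\<in>I. l j * q j x)"
          using sp unfolding m_def by (simp add: sum_distrib_left)
        then show "l i * q i x + (1 - l i) * (\<Sum>j\<in>I. m j * q j x) = (\<Sum>j\<in>insert i I. l j * q j x)"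
          using insert by simp
      qed
      ultimately show ?thesis by simp
    qed
  qed
qed

lemma gibbs:
  fixes s r :: "'a::finite \<Rightarrow> real"
  assumes "is_dist s" "is_dist r" "\<And>x. s x \<noteq> 0 \<Longrightarrow> r x \<noteq> 0"
  shows "(\<Sum>x\<in>UNIV. s x * (ln (s x) - ln (r x))) \<ge> 0"
proof -
  have "(\<Sum>x\<in>UNIV. s x - r x) \<le> (\<Sum>x\<in>UNIV. s x * (ln (s x) - ln (r x)))"
  proof (rule sum_mono)
    fix x
    show "s x - r x \<le> s x * (ln (s x) - ln (r x))"
    proof (cases "s x = 0")
      case True then show ?thesis using assms(2) by (simp add: is_dist_def)
    next
      case False
      then have sp: "s x > 0" and rp: "r x > 0" using assms by (auto simp: is_dist_def order_neq_le_trans)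
      have "ln (r x / s x) \<le> r x / s x - 1" using sp rp by (intro ln_le_minus_one) auto
      then have "s x * ln (r x / s x) \<le> s x * (r x / s x - 1)" using sp by (simp add: mult_left_mono)
      then show ?thesis using sp rp by (simp add: ln_div algebra_simps)
    qed
  qed
  moreover have "(\<Sum>x\<in>UNIV. s x - r x) = 0" using assms by (simp add: sum_subtractf is_dist_def)
  ultimately show ?thesis by simp
qed

theorem mainTheorem10:
  fixes M :: "('a::finite \<Rightarrow> real) set"
    and p :: nat
    and phat :: "nat \<Rightarrow> 'a \<Rightarrow> real"
    and lam :: "nat \<Rightarrow> real"
  assumes "p \<ge> 1"
    and "linear_model M"
    and "\<And>k. k \<in> {1..p} \<Longrightarrow> is_dist (phat k)"
    and "\<And>k. k \<in> {1..p} \<Longrightarrow> KL (phat k) (pistar M (phat k)) < \<infinity>"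
    and "\<And>k. k \<in> {1..p} \<Longrightarrow> lam k \<ge> 0"
    and "(\<Sum>k\<in>{1..p}. lam k) = 1"
  shows "pistar M (\<lambda>x. \<Sum>k\<in>{1..p}. lam k * phat k x)
         = (\<lambda>x. \<Sum>k\<in>{1..p}. lam k * pistar M (phat k) x)"
proof -
  have LM1: "\<forall>\<pi>\<in>M. is_dist \<pi>" and LM2: "convex_dist_set M"
    and LM3: "\<forall>P. is_dist P \<longrightarrow> (\<exists>!\<pi>. is_KL_minimizer M P \<pi>)"
    and LM4: "\<forall>P. is_dist P \<longrightarrow> (\<forall>\<pi>\<in>M. KL P \<pi> = KL P (pistar M P) + KL (pistar M P) \<pi>)"
    using assms(2) unfolding linear_model_def by auto
  define P where "P = (\<lambda>x. \<Sum>k\<in>{1..p}. lam k * phat k x)"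
  define pk where "pk k = pistar M (phat k)" for k
  define sg where "sg = (\<lambda>x. \<Sum>k\<in>{1..p}. lam k * pk k x)"
  have min: "is_KL_minimizer M (phat k) (pk k)" if "k \<in> {1..p}" for k
  proof -
    have "\<exists>!\<pi>. is_KL_minimizer M (phat k) \<pi>" using LM3 assms(3) that by blast
    then show ?thesis unfolding pk_def pistar_def by (rule theI')
  qed
  have pkM: "pk k \<in> M" if "k \<in> {1..p}" for k using min[OF that] by (simp add: is_KL_minimizer_def)
  have pkd: "is_dist (pk k)" if "k \<in> {1..p}" for k using pkM[OF that] LM1 by blast
  have sgM: "sg \<in> M" unfolding sg_def
    using convex_comb_mem[where M=M and q=pk, OF _ finite_atLeastAtMost] LM2 assms(5,6) pkM by blast
  have dist_comb: "is_dist (\<lambda>x. \<Sum>k\<in>{1..p}. lam k * q k x)"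
    if "\<And>k. k \<in> {1..p} \<Longrightarrow> is_dist (q k)" for q :: "nat \<Rightarrow> 'a \<Rightarrow> real"
  proof -
    have "(\<Sum>x\<in>UNIV. \<Sum>k\<in>{1..p}. lam k * q k x) = (\<Sum>k\<in>{1..p}. lam k * (\<Sum>x\<in>UNIV. q k x))"
      by (subst sum.swap) (simp add: sum_distrib_left)
    also have "\<dots> = 1" using that assms(6) by (simp add: is_dist_def)
    finally show ?thesis using that assms(5) unfolding is_dist_def
      by (auto intro!: sum_nonneg mult_nonneg_nonneg)
  qed
  have Pd: "is_dist P" unfolding P_def using dist_comb assms(3) by blast
  have sgd: "is_dist sg" unfolding sg_def using dist_comb pkd by blast
  have ge_term: "lam k * q k x \<le> (\<Sum>k\<in>{1..p}. lam k * q k x)"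
    if "k \<in> {1..p}" "\<And>k. k \<in> {1..p} \<Longrightarrow> is_dist (q k)" for q :: "nat \<Rightarrow> 'a \<Rightarrow> real" and k x
    using that assms(5) by (intro member_le_sum[where f="\<lambda>k. lam k * q k x"]) (auto simp: is_dist_def)
  have pos_term: "\<exists>k\<in>{1..p}. lam k \<noteq> 0 \<and> q k x \<noteq> 0"
    if "(\<Sum>k\<in>{1..p}. lam k * q k x) \<noteq> 0" for q :: "nat \<Rightarrow> 'a \<Rightarrow> real" and x
  proof (rule ccontr)
    assume "\<not> (\<exists>k\<in>{1..p}. lam k \<noteq> 0 \<and> q k x \<noteq> 0)"
    then have "\<forall>k\<in>{1..p}. lam k * q k x = 0" by auto
    then have "(\<Sum>k\<in>{1..p}. lam k * q k x) = 0" by (rule sum.neutral)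
    then show False using that by blast
  qed
  have isminP: "is_KL_minimizer M P sg"
    unfolding is_KL_minimizer_def
  proof (intro conjI ballI sgM)
    fix \<pi> assume piM: "\<pi> \<in> M"
    have pid: "is_dist \<pi>" using piM LM1 by blast
    show "KL P sg \<le> KL P \<pi>"
    proof (cases "\<exists>x. P x \<noteq> 0 \<and> \<pi> x = 0")
      case True
      then obtain x where "P x \<noteq> 0" "\<pi> x = 0" by blast
      then have "KL P \<pi> = \<infinity>" by (rule KL_inf)
      then show ?thesis by simp
    next
      case False
      then have suppP: "\<And>x. P x \<noteq> 0 \<Longrightarrow> \<pi> x \<noteq> 0" by blast
      define f where "f x = ln (sg x) - ln (\<pi> x)" for x
      have perk: "(\<forall>x. pk k x \<noteq> 0 \<longrightarrow> \<pi> x \<noteq> 0) \<and>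
                  (\<Sum>x\<in>UNIV. phat k x * f x) = (\<Sum>x\<in>UNIV. pk k x * f x)"
        if k: "k \<in> {1..p}" "lam k \<noteq> 0" for k
      proof -
        have lk: "lam k > 0" using k assms(5) by (simp add: order_neq_le_trans)
        have phd: "is_dist (phat k)" using assms(3) k by blast
        have Pk: "P x \<noteq> 0" if "phat k x \<noteq> 0" for x
        proof -
          have "phat k x > 0" using that phd by (simp add: is_dist_def order_neq_le_trans)
          then have "lam k * phat k x > 0" using lk by simp
          moreover have "lam k * phat k x \<le> P x" unfolding P_def using ge_term[OF k(1)] assms(3) by blast
          ultimately show ?thesis by simp
        qed
        have s1: "\<pi> x \<noteq> 0" if "phat k x \<noteq> 0" for x using suppP Pk that by blast
        have s2: "pk k x \<noteq> 0" if "phat k x \<noteq> 0" for x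
          using KL_fin_supp[of "phat k" "pk k" x] assms(4)[OF k(1)] that unfolding pk_def by auto
        have s3: "sg x \<noteq> 0" if "phat k x \<noteq> 0" for x
        proof -
          have "pk k x > 0" using s2[OF that] pkd[OF k(1)] by (simp add: is_dist_def order_neq_le_trans)
          then have "lam k * pk k x > 0" using lk by simp
          moreover have "lam k * pk k x \<le> sg x" unfolding sg_def using ge_term[OF k(1)] pkd by blast
          ultimately show ?thesis by simp
        qed
        have pyth: "KL (phat k) q = KL (phat k) (pk k) + KL (pk k) q" if "q \<in> M" for q
          using LM4 phd that unfolding pk_def by blast
        have A: "KL (phat k) (pk k) = ereal (\<Sum>x\<in>UNIV. phat k x * ln (phat k x / pk k x))"
          using KL_real s2 by blast
        have B: "KL (phat k) \<pi> = ereal (\<Sum>x\<in>UNIV. phat k x * ln (phat k x / \<pi> x))"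
          using KL_real s1 by blast
        have C: "KL (phat k) sg = ereal (\<Sum>x\<in>UNIV. phat k x * ln (phat k x / sg x))"
          using KL_real s3 by blast
        have fin1: "KL (pk k) \<pi> \<noteq> \<infinity>" using pyth[OF piM] A B by auto
        have s4: "\<pi> x \<noteq> 0" if "pk k x \<noteq> 0" for x using KL_fin_supp fin1 that by blast
        have s5: "sg x \<noteq> 0" if "pk k x \<noteq> 0" for x
        proof -
          have "pk k x > 0" using that pkd[OF k(1)] by (simp add: is_dist_def order_neq_le_trans)
          then have "lam k * pk k x > 0" using lk by simp
          moreover have "lam k * pk k x \<le> sg x" unfolding sg_def using ge_term[OF k(1)] pkd by blast
          ultimately show ?thesis by simp
        qed
        have D: "KL (pk k) \<pi> = ereal (\<Sum>x\<in>UNIV. pk k x * ln (pk k x / \<pi> x))"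
          using KL_real s4 by blast
        have E: "KL (pk k) sg = ereal (\<Sum>x\<in>UNIV. pk k x * ln (pk k x / sg x))"
          using KL_real s5 by blast
        have e1: "(\<Sum>x\<in>UNIV. phat k x * ln (phat k x / \<pi> x)) = (\<Sum>x\<in>UNIV. phat k x * ln (phat k x / pk k x)) + (\<Sum>x\<in>UNIV. pk k x * ln (pk k x / \<pi> x))"
          using pyth[OF piM] A B D by simp
        have e2: "(\<Sum>x\<in>UNIV. phat k x * ln (phat k x / sg x)) = (\<Sum>x\<in>UNIV. phat k x * ln (phat k x / pk k x)) + (\<Sum>x\<in>UNIV. pk k x * ln (pk k x / sg x))"
          using pyth[OF sgM] A C E by simp
        have t1: "(\<Sum>x\<in>UNIV. phat k x * f x) = (\<Sum>x\<in>UNIV. phat k x * ln (phat k x / \<pi> x)) - (\<Sum>x\<in>UNIV. phat k x * ln (phat k x / sg x))"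
          unfolding sum_subtractf[symmetric]
        proof (rule sum.cong)
          fix x
          show "phat k x * f x = phat k x * ln (phat k x / \<pi> x) - phat k x * ln (phat k x / sg x)"
          proof (cases "phat k x = 0")
            case False
            then have "phat k x > 0" "\<pi> x > 0" "sg x > 0" using phd pid sgd s1 s3
              by (auto simp: is_dist_def order_neq_le_trans)
            then show ?thesis unfolding f_def by (simp add: ln_div algebra_simps)
          qed simp
        qed simp
        have t2: "(\<Sum>x\<in>UNIV. pk k x * f x) = (\<Sum>x\<in>UNIV. pk k x * ln (pk k x / \<pi> x)) - (\<Sum>x\<in>UNIV. pk k x * ln (pk k x / sg x))"
          unfolding sum_subtractf[symmetric]
        proof (rule sum.cong)
          fix x
          show "pk k x * f x = pk k x * ln (pk k x / \<pi> x) - pk k x * ln (pk k x / sg x)"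
          proof (cases "pk k x = 0")
            case False
            then have "pk k x > 0" "\<pi> x > 0" "sg x > 0" using pkd[OF k(1)] pid sgd s4 s5
              by (auto simp: is_dist_def order_neq_le_trans)
            then show ?thesis unfolding f_def by (simp add: ln_div algebra_simps)
          qed simp
        qed simp
        show ?thesis using s4 t1 t2 e1 e2 by simp
      qed
      have suppsg: "\<pi> x \<noteq> 0" if "sg x \<noteq> 0" for x
        using pos_term[of pk x] that perk unfolding sg_def by blast
      have "(\<Sum>x\<in>UNIV. P x * f x) = (\<Sum>x\<in>UNIV. \<Sum>k\<in>{1..p}. lam k * (phat k x * f x))"
        unfolding P_def by (simp add: sum_distrib_right mult.assoc)
      also have "\<dots> = (\<Sum>k\<in>{1..p}. \<Sum>x\<in>UNIV. lam k * (phat k x * f x))"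
        by (rule sum.swap)
      also have "\<dots> = (\<Sum>k\<in>{1..p}. lam k * (\<Sum>x\<in>UNIV. phat k x * f x))"
        by (simp add: sum_distrib_left)
      also have "\<dots> = (\<Sum>k\<in>{1..p}. lam k * (\<Sum>x\<in>UNIV. pk k x * f x))"
        using perk by (intro sum.cong) auto
      also have "\<dots> = (\<Sum>k\<in>{1..p}. \<Sum>x\<in>UNIV. lam k * (pk k x * f x))"
        by (simp add: sum_distrib_left)
      also have "\<dots> = (\<Sum>x\<in>UNIV. \<Sum>k\<in>{1..p}. lam k * (pk k x * f x))"
        by (rule sum.swap)
      also have "\<dots> = (\<Sum>x\<in>UNIV. sg x * f x)"
        unfolding sg_def by (simp add: sum_distrib_right mult.assoc)
      finally have PF: "(\<Sum>x\<in>UNIV. P x * f x) \<ge> 0"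
        using gibbs[OF sgd pid suppsg] unfolding f_def by simp
      have s3: "sg x \<noteq> 0" if Px: "P x \<noteq> 0" for x
      proof -
        obtain k where k: "k \<in> {1..p}" "lam k \<noteq> 0" "phat k x \<noteq> 0" using pos_term[of phat x] Px unfolding P_def by blast
        have lk: "lam k > 0" using k assms(5) by (simp add: order_neq_le_trans)
        have "pk k x \<noteq> 0"
          using KL_fin_supp[of "phat k" "pk k" x] assms(4)[OF k(1)] k unfolding pk_def by auto
        then have "pk k x > 0" using pkd[OF k(1)] by (simp add: is_dist_def order_neq_le_trans)
        then have "lam k * pk k x > 0" using lk by simp
        moreover have "lam k * pk k x \<le> sg x" unfolding sg_def using ge_term[OF k(1)] pkd by blast
        ultimately show ?thesis by simp
      qed
      have "(\<Sum>x\<in>UNIV. P x * f x) = (\<Sum>x\<in>UNIV. P x * ln (P x / \<pi> x)) - (\<Sum>x\<in>UNIV. P x * ln (P x / sg x))"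
        unfolding sum_subtractf[symmetric]
      proof (rule sum.cong)
        fix x
        show "P x * f x = P x * ln (P x / \<pi> x) - P x * ln (P x / sg x)"
        proof (cases "P x = 0")
          case False
          then have "P x > 0" "\<pi> x > 0" "sg x > 0" using Pd pid sgd suppP s3
            by (auto simp: is_dist_def order_neq_le_trans)
          then show ?thesis unfolding f_def by (simp add: ln_div algebra_simps)
        qed simp
      qed simp
      then show ?thesis using PF KL_real[of P \<pi>, OF suppP] KL_real[of P sg, OF s3] by simp
    qed
  qed
  have "\<exists>!\<pi>. is_KL_minimizer M P \<pi>" using LM3 Pd by blast
  then have "pistar M P = sg" unfolding pistar_def using isminP by (metis the1_equality)
  then show ?thesis unfolding P_def sg_def pk_def .
qed

end
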